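(* Let $z_1,\dots,z_m$ be distinct points of $\partial\mathbb{D}$, let $\mu=\sum_{j=1}^m\mu_j\delta_{z_j}$ with $\mu_j>0$, $\sum_j\mu_j=1$, and let $G$ be a real-valued function on $\{z_1,\dots,z_m\}$, with the points numbered so that $G(z_1)\geq G(z_2)\geq\cdots\geq G(z_m)$. Let $K_1,\dots,K_L$ be the $K$-groups, $K_i=\{k_{i-1}+1,\dots,k_i\}$ ($k_0=0$, $k_L=m$), i.e. the maximal blocks of consecutive indices on which $G(z_\cdot)$ is constant, so $G(z_{k_i})>G(z_{k_i+1})$. For $t\ge0$ put $\Sigma_t(\mu)=e^{tG}\mu/\int e^{tG}d\mu$. For each $i$ put $z^{(K_i)}=\prod_{p=1}^{k_{i-1}}z_p$ and let $\mu^{(K_i)}=\sum_{\ell\in K_i}\mu^{(K_i)}_\ell\delta_{z_\ell}$ with \[ \mu^{(K_i)}_\ell=\frac{\bigl[\prod_{p=1}^{k_{i-1}}|z_\ell-z_p|^2\bigr]\mu_\ell}{\sum_{r\in K_i}\bigl[\prod_{p=1}^{k_{i-1}}|z_r-z_p|^2\bigr]\mu_r}. \] Then for every $i$ and every $\ell\in K_i$, \[ \lim_{t\to\infty}\alpha_{\ell-1}(\Sigma_t(\mu))=(-1)^{k_{i-1}}\,\overline{z^{(K_i)}}\;\alpha_{\ell-k_{i-1}-1}(\mu^{(K_i)}). \]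
   Context: For a positive finite measure $\nu$ on $\partial\mathbb{D}=\{|z|=1\}$ whose support has at least $n$ points, $\Phi_n(z;\nu)$ denotes the monic orthogonal polynomial of degree $n$ (the unique monic degree-$n$ polynomial orthogonal in $L^2(\nu)$ to all polynomials of lower degree). The Verblunsky coefficients are $\alpha_n(\nu)=-\overline{\Phi_{n+1}(0;\nu)}$ for $n+1\le\#\mathrm{supp}\,\nu$; equivalently $\Phi_{n+1}(z)=z\Phi_n(z)-\overline{\alpha_n}\Phi_n^*(z)$ with $\Phi_n^*(z)=z^n\overline{\Phi_n(1/\bar z)}$. An empty product equals $1$. *)

theory Defs
  imports Complex_Main "HOL-Computational_Algebra.Polynomial"
begin

text \<open>A finitely supported positive measure on the unit circle is represented by its
  (finite) support S and its weight function w (w x = mass of the atom at x).\<close>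
definition l2ip :: "complex set \<Rightarrow> (complex \<Rightarrow> real) \<Rightarrow> complex poly \<Rightarrow> complex poly \<Rightarrow> complex" where
  "l2ip S w p q = (\<Sum>x\<in>S. complex_of_real (w x) * poly p x * cnj (poly q x))"

definition monicOP :: "complex set \<Rightarrow> (complex \<Rightarrow> real) \<Rightarrow> nat \<Rightarrow> complex poly" where
  "monicOP S w n = (THE p. degree p = n \<and> lead_coeff p = 1 \<and>
      (\<forall>q. degree q < n \<longrightarrow> l2ip S w p q = 0))"

definition verblunsky :: "complex set \<Rightarrow> (complex \<Rightarrow> real) \<Rightarrow> nat \<Rightarrow> complex" where
  "verblunsky S w n = - cnj (poly (monicOP S w (Suc n)) 0)"

definition dmeas_w :: "(nat \<Rightarrow> complex) \<Rightarrow> (nat \<Rightarrow> real) \<Rightarrow> nat set \<Rightarrow> complex \<Rightarrow> real" where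
  "dmeas_w z c J = (\<lambda>x. \<Sum>j\<in>{j\<in>J. z j = x}. c j)"

definition verb_disc :: "(nat \<Rightarrow> complex) \<Rightarrow> (nat \<Rightarrow> real) \<Rightarrow> nat set \<Rightarrow> nat \<Rightarrow> complex" where
  "verb_disc z c J n = verblunsky (z ` J) (dmeas_w z c J) n"

definition is_K_group :: "(complex \<Rightarrow> real) \<Rightarrow> (nat \<Rightarrow> complex) \<Rightarrow> nat \<Rightarrow> nat \<Rightarrow> nat \<Rightarrow> bool" where
  "is_K_group G z m a b \<longleftrightarrow> a < b \<and> b \<le> m \<and>
     (\<forall>j\<in>{a+1..b}. G (z j) = G (z (a+1))) \<and>
     (a = 0 \<or> G (z a) \<noteq> G (z (a+1))) \<and>
     (b = m \<or> G (z b) \<noteq> G (z (b+1)))"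

definition sigma_w :: "(complex \<Rightarrow> real) \<Rightarrow> (nat \<Rightarrow> complex) \<Rightarrow> (nat \<Rightarrow> real) \<Rightarrow> nat \<Rightarrow> real \<Rightarrow> nat \<Rightarrow> real" where
  "sigma_w G z \<mu> m t j = \<mu> j * exp (t * G (z j)) / (\<Sum>r\<in>{1..m}. \<mu> r * exp (t * G (z r)))"

definition muK_w :: "(nat \<Rightarrow> complex) \<Rightarrow> (nat \<Rightarrow> real) \<Rightarrow> nat \<Rightarrow> nat \<Rightarrow> nat \<Rightarrow> real" where
  "muK_w z \<mu> a b l = (\<Prod>p\<in>{1..a}. (cmod (z l - z p))^2) * \<mu> l /
      (\<Sum>r\<in>{a+1..b}. (\<Prod>p\<in>{1..a}. (cmod (z r - z p))^2) * \<mu> r)"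

end

theory Submission
  imports Defs
begin


definition VV :: "(nat \<Rightarrow> complex) \<Rightarrow> nat set \<Rightarrow> real" where
  "VV z S = (\<Prod>i\<in>S. \<Prod>j\<in>S-{i}. cmod (z i - z j))"

definition cw :: "(nat \<Rightarrow> complex) \<Rightarrow> (nat \<Rightarrow> real) \<Rightarrow> nat set \<Rightarrow> real" where
  "cw z w S = (\<Prod>j\<in>S. w j) * VV z S"

definition subs :: "nat set \<Rightarrow> nat \<Rightarrow> nat set set" where
  "subs J n = {S. S \<subseteq> J \<and> card S = n}"

definition heine :: "(nat \<Rightarrow> complex) \<Rightarrow> (nat \<Rightarrow> real) \<Rightarrow> nat set \<Rightarrow> nat \<Rightarrow> complex poly" where
  "heine z w J n = smult (1 / complex_of_real (\<Sum>S\<in>subs J n. cw z w S))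
     (\<Sum>S\<in>subs J n. smult (complex_of_real (cw z w S)) (\<Prod>j\<in>S. [:- z j, 1:]))"

lemma finite_subs: "finite J \<Longrightarrow> finite (subs J n)"
  unfolding subs_def by (rule finite_subset[of _ "Pow J"]) auto

lemma VV_empty[simp]: "VV z {} = 1" by (simp add: VV_def)

lemma VV_insert:
  assumes "finite S" "x \<notin> S"
  shows "VV z (insert x S) = VV z S * (\<Prod>j\<in>S. cmod (z x - z j))^2"
proof -
  have e1: "insert x S - {x} = S" using assms by auto
  have e2: "\<And>i. i \<in> S \<Longrightarrow> insert x S - {i} = insert x (S - {i})" using assms by auto
  have "VV z (insert x S) = (\<Prod>j\<in>S. cmod (z x - z j)) *
        (\<Prod>i\<in>S. \<Prod>j\<in>insert x S-{i}. cmod (z i - z j))"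
    unfolding VV_def using assms by (simp add: e1)
  also have "(\<Prod>i\<in>S. \<Prod>j\<in>insert x S-{i}. cmod (z i - z j)) =
       (\<Prod>i\<in>S. cmod (z x - z i) * (\<Prod>j\<in>S-{i}. cmod (z i - z j)))"
  proof (rule prod.cong[OF refl])
    fix i assume i: "i \<in> S"
    hence "x \<noteq> i" using assms by auto
    then show "(\<Prod>j\<in>insert x S-{i}. cmod (z i - z j)) = cmod (z x - z i) * (\<Prod>j\<in>S-{i}. cmod (z i - z j))"
      using assms i by (simp add: e2 norm_minus_commute)
  qed
  also have "\<dots> = (\<Prod>i\<in>S. cmod (z x - z i)) * VV z S"
    by (simp add: prod.distrib VV_def)
  finally show ?thesis by (simp add: power2_eq_square)
qed

lemma VV_pos:
  assumes "finite S" "inj_on z S"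
  shows "VV z S > 0"
  unfolding VV_def
proof (intro prod_pos ballI)
  fix i j assume "i \<in> S" "j \<in> S - {i}"
  then have "z i \<noteq> z j" using assms(2) by (auto dest: inj_onD)
  then show "0 < cmod (z i - z j)" by simp
qed

lemma cw_pos:
  assumes "finite S" "inj_on z S" "\<forall>j\<in>S. w j > 0"
  shows "cw z w S > 0"
  unfolding cw_def using VV_pos[OF assms(1,2)] assms(3) by (simp add: prod_pos)

lemma lin_prod:
  fixes z :: "nat \<Rightarrow> complex"
  assumes "finite S"
  shows "degree (\<Prod>j\<in>S. [:- z j, 1:]) = card S" "coeff (\<Prod>j\<in>S. [:- z j, 1:]) (card S) = 1"
proof -
  have "degree (\<Prod>j\<in>S. [:- z j, 1:]) = (\<Sum>j\<in>S. degree [:- z j, 1:])"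
    by (rule degree_prod_eq_sum_degree) auto
  then show d: "degree (\<Prod>j\<in>S. [:- z j, 1:]) = card S" by simp
  have "lead_coeff (\<Prod>j\<in>S. [:- z j, 1:]) = 1" by (simp add: lead_coeff_prod)
  then show "coeff (\<Prod>j\<in>S. [:- z j, 1:]) (card S) = 1" using d by simp
qed

lemma lagrange_sum:
  fixes z :: "nat \<Rightarrow> complex" and q :: "complex poly"
  assumes fin: "finite T" and inj: "inj_on z T" and deg: "degree q + 1 < card T"
  shows "(\<Sum>x\<in>T. poly q (z x) / (\<Prod>j\<in>T-{x}. (z x - z j))) = 0"
proof -
  define c where "c x = poly q (z x) / (\<Prod>j\<in>T-{x}. (z x - z j))" for x
  define L where "L = (\<Sum>x\<in>T. smult (c x) (\<Prod>j\<in>T-{x}. [:- z j, 1:]))"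
  have cardT: "\<And>x. x \<in> T \<Longrightarrow> card (T - {x}) = card T - 1" using fin by simp
  have degL: "degree L \<le> card T - 1"
    unfolding L_def
  proof (rule degree_sum_le[OF fin])
    fix x assume x: "x \<in> T"
    have "degree (smult (c x) (\<Prod>j\<in>T-{x}. [:- z j, 1:])) \<le> degree (\<Prod>j\<in>T-{x}. [:- z j, 1:])"
      by (rule degree_smult_le)
    also have "\<dots> = card T - 1" using lin_prod(1)[of "T-{x}" z] fin cardT[OF x] by simp
    finally show "degree (smult (c x) (\<Prod>j\<in>T-{x}. [:- z j, 1:])) \<le> card T - 1" .
  qed
  have nz: "\<And>x. x \<in> T \<Longrightarrow> (\<Prod>j\<in>T-{x}. (z x - z j)) \<noteq> 0"
  proof -
    fix x assume x: "x \<in> T"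
    show "(\<Prod>j\<in>T-{x}. (z x - z j)) \<noteq> 0"
    proof (subst prod_zero_iff)
      show "finite (T - {x})" using fin by simp
      show "\<not> (\<exists>a\<in>T - {x}. z x - z a = 0)" using inj x by (auto dest: inj_onD)
    qed
  qed
  have evalL: "poly L (z y) = poly q (z y)" if y: "y \<in> T" for y
  proof -
    have "poly L (z y) = (\<Sum>x\<in>T. c x * (\<Prod>j\<in>T-{x}. (z y - z j)))"
      unfolding L_def by (simp add: poly_sum poly_prod)
    also have "\<dots> = c y * (\<Prod>j\<in>T-{y}. (z y - z j)) + (\<Sum>x\<in>T-{y}. c x * (\<Prod>j\<in>T-{x}. (z y - z j)))"
      using fin y by (simp add: sum.remove)
    also have "(\<Sum>x\<in>T-{y}. c x * (\<Prod>j\<in>T-{x}. (z y - z j))) = 0"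
    proof (rule sum.neutral, rule ballI)
      fix x assume x: "x \<in> T - {y}"
      have "(\<Prod>j\<in>T-{x}. (z y - z j)) = 0"
        using fin x y by (subst prod_zero_iff) auto
      then show "c x * (\<Prod>j\<in>T-{x}. (z y - z j)) = 0" by simp
    qed
    also have "c y * (\<Prod>j\<in>T-{y}. (z y - z j)) = poly q (z y)"
      using nz[OF y] unfolding c_def by simp
    finally show ?thesis by simp
  qed
  have "L = q"
  proof (rule poly_eqI_degree[of "z ` T"])
    show "\<And>x. x \<in> z ` T \<Longrightarrow> poly L x = poly q x" using evalL by auto
    have ct: "card (z ` T) = card T" using card_image[OF inj] .
    show "degree L < card (z ` T)" using degL deg ct by linarith
    show "degree q < card (z ` T)" using deg ct by linarith
  qed
  have "coeff L (card T - 1) = (\<Sum>x\<in>T. c x)"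
    unfolding L_def coeff_sum
  proof (rule sum.cong[OF refl])
    fix x assume x: "x \<in> T"
    show "coeff (smult (c x) (\<Prod>j\<in>T-{x}. [:- z j, 1:])) (card T - 1) = c x"
      using lin_prod(2)[of "T-{x}" z] fin cardT[OF x] by simp
  qed
  moreover have "coeff q (card T - 1) = 0" using deg by (intro coeff_eq_0) linarith
  ultimately show ?thesis using \<open>L = q\<close> unfolding c_def by simp
qed

lemma cw_remove:
  assumes "finite T" "x \<in> T"
  shows "cw z w T = w x * cw z w (T - {x}) * (\<Prod>j\<in>T-{x}. cmod (z x - z j))^2"
proof -
  have fT': "finite (T - {x})" and nx: "x \<notin> T - {x}" using assms by auto
  have "cw z w T = cw z w (insert x (T - {x}))" using assms by (simp add: insert_absorb)
  also have "\<dots> = w x * cw z w (T - {x}) * (\<Prod>j\<in>T-{x}. cmod (z x - z j))^2"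
    unfolding cw_def prod.insert[OF fT' nx] VV_insert[OF fT' nx] by (simp add: mult_ac)
  finally show ?thesis .
qed

lemma heine_orth:
  fixes z :: "nat \<Rightarrow> complex" and q :: "complex poly"
  assumes fin: "finite J" and inj: "inj_on z J" and deg: "degree q < n"
  shows "(\<Sum>x\<in>J. complex_of_real (w x) * poly (heine z w J n) (z x) * cnj (poly q (z x))) = 0"
proof -
  define C where "C = complex_of_real (\<Sum>S\<in>subs J n. cw z w S)"
  define f where "f S x = complex_of_real (w x) * complex_of_real (cw z w S) * (\<Prod>i\<in>S. (z x - z i)) * cnj (poly q (z x))" for S x
  have ph: "poly (heine z w J n) y = (1 / C) * (\<Sum>S\<in>subs J n. complex_of_real (cw z w S) * (\<Prod>i\<in>S. (y - z i)))" for y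
    unfolding heine_def C_def by (simp add: poly_sum poly_prod)
  have "(\<Sum>x\<in>J. complex_of_real (w x) * poly (heine z w J n) (z x) * cnj (poly q (z x)))
      = (1 / C) * (\<Sum>x\<in>J. \<Sum>S\<in>subs J n. f S x)"
    unfolding ph f_def by (simp add: sum_distrib_left sum_distrib_right mult_ac)
  also have "(\<Sum>x\<in>J. \<Sum>S\<in>subs J n. f S x) = (\<Sum>S\<in>subs J n. \<Sum>x\<in>J. f S x)"
    by (rule sum.swap)
  also have "\<dots> = (\<Sum>S\<in>subs J n. \<Sum>x\<in>J-S. f S x)"
  proof (rule sum.cong[OF refl])
    fix S assume S: "S \<in> subs J n"
    then have SJ: "S \<subseteq> J" by (simp add: subs_def)
    have "(\<Sum>x\<in>J. f S x) = (\<Sum>x\<in>J-S. f S x) + (\<Sum>x\<in>S. f S x)"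
      using fin SJ by (metis sum.subset_diff)
    also have "(\<Sum>x\<in>S. f S x) = 0"
    proof (rule sum.neutral, rule ballI)
      fix x assume x: "x \<in> S"
      have "finite S" using SJ fin by (rule finite_subset)
      then have "(\<Prod>i\<in>S. (z x - z i)) = 0" using x by (subst prod_zero_iff) auto
      then show "f S x = 0" unfolding f_def by simp
    qed
    finally show "(\<Sum>x\<in>J. f S x) = (\<Sum>x\<in>J-S. f S x)" by simp
  qed
  also have "\<dots> = (\<Sum>(S,x)\<in>Sigma (subs J n) (\<lambda>S. J - S). f S x)"
    using fin by (intro sum.Sigma) (auto simp: finite_subs)
  also have "\<dots> = (\<Sum>(T,x)\<in>Sigma (subs J (Suc n)) (\<lambda>T. T). f (T - {x}) x)"
  proof (rule sum.reindex_bij_witness[where i = "\<lambda>(T,x). (T - {x}, x)" and j = "\<lambda>(S,x). (insert x S, x)"])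
    fix p assume p: "p \<in> Sigma (subs J n) (\<lambda>S. J - S)"
    obtain S x where px: "p = (S, x)" by (cases p)
    have SJ: "S \<subseteq> J" "card S = n" "x \<in> J" "x \<notin> S" using p px by (auto simp: subs_def)
    have fS: "finite S" using SJ(1) fin by (rule finite_subset)
    show "(case (case p of (S, x) \<Rightarrow> (insert x S, x)) of (T, x) \<Rightarrow> (T - {x}, x)) = p"
      using px SJ by auto
    show "(case p of (S, x) \<Rightarrow> (insert x S, x)) \<in> Sigma (subs J (Suc n)) (\<lambda>T. T)"
      using px SJ fS by (auto simp: subs_def)
    show "(case (case p of (S, x) \<Rightarrow> (insert x S, x)) of (T, x) \<Rightarrow> f (T - {x}) x) = (case p of (S, x) \<Rightarrow> f S x)"
      using px SJ by (simp add: insert_Diff_if)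
  next
    fix p assume p: "p \<in> Sigma (subs J (Suc n)) (\<lambda>T. T)"
    obtain T x where px: "p = (T, x)" by (cases p)
    have TJ: "T \<subseteq> J" "card T = Suc n" "x \<in> T" using p px by (auto simp: subs_def)
    have fT: "finite T" using TJ(1) fin by (rule finite_subset)
    show "(case (case p of (T, x) \<Rightarrow> (T - {x}, x)) of (S, x) \<Rightarrow> (insert x S, x)) = p"
      using px TJ by auto
    show "(case p of (T, x) \<Rightarrow> (T - {x}, x)) \<in> Sigma (subs J n) (\<lambda>S. J - S)"
      using px TJ fT by (auto simp: subs_def)
  qed
  also have "\<dots> = (\<Sum>T\<in>subs J (Suc n). \<Sum>x\<in>T. f (T - {x}) x)"
    using fin by (intro sum.Sigma[symmetric]) (auto simp: finite_subs subs_def intro: finite_subset)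
  also have "\<dots> = (\<Sum>T\<in>subs J (Suc n). complex_of_real (cw z w T) *
        cnj (\<Sum>x\<in>T. poly q (z x) / (\<Prod>j\<in>T-{x}. (z x - z j))))"
  proof (rule sum.cong[OF refl])
    fix T assume T: "T \<in> subs J (Suc n)"
    then have TJ: "T \<subseteq> J" by (simp add: subs_def)
    have fT: "finite T" using TJ fin by (rule finite_subset)
    have injT: "inj_on z T" using inj TJ by (rule inj_on_subset)
    have "f (T - {x}) x = complex_of_real (cw z w T) * cnj (poly q (z x) / (\<Prod>j\<in>T-{x}. (z x - z j)))"
      if x: "x \<in> T" for x
    proof -
      define P where "P = (\<Prod>j\<in>T-{x}. (z x - z j))"
      have Pnz: "P \<noteq> 0" unfolding P_def using fT injT x
        by (subst prod_zero_iff) (auto dest: inj_onD)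
      have nP: "(\<Prod>j\<in>T-{x}. cmod (z x - z j)) = cmod P" unfolding P_def by (simp add: prod_norm)
      have "complex_of_real (cw z w T) = complex_of_real (w x) * complex_of_real (cw z w (T - {x})) * (P * cnj P)"
        using cw_remove[OF fT x, of z w] nP complex_norm_square[of P] by simp
      then have "complex_of_real (cw z w T) * cnj (poly q (z x) / P) =
          complex_of_real (w x) * complex_of_real (cw z w (T - {x})) * P * cnj (poly q (z x))"
        using Pnz by (simp add: complex_cnj_divide field_simps)
      then show ?thesis unfolding f_def P_def by simp
    qed
    then show "(\<Sum>x\<in>T. f (T - {x}) x) = complex_of_real (cw z w T) *
        cnj (\<Sum>x\<in>T. poly q (z x) / (\<Prod>j\<in>T-{x}. (z x - z j)))"
      by (simp add: sum_distrib_left cnj_sum)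
  qed
  also have "\<dots> = 0"
  proof (rule sum.neutral, rule ballI)
    fix T assume T: "T \<in> subs J (Suc n)"
    then have TJ: "T \<subseteq> J" "card T = Suc n" by (auto simp: subs_def)
    have fT: "finite T" using TJ fin by (intro finite_subset[of T J]) auto
    have injT: "inj_on z T" using inj TJ by (intro inj_on_subset[of z J T]) auto
    have "(\<Sum>x\<in>T. poly q (z x) / (\<Prod>j\<in>T-{x}. (z x - z j))) = 0"
      using lagrange_sum[OF fT injT] TJ deg by simp
    then show "complex_of_real (cw z w T) * cnj (\<Sum>x\<in>T. poly q (z x) / (\<Prod>j\<in>T-{x}. (z x - z j))) = 0"
      by simp
  qed
  finally show ?thesis by simp
qed

lemma l2ip_reindex:
  assumes fin: "finite J" and inj: "inj_on z J"
  shows "l2ip (z ` J) (dmeas_w z w J) p q =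
    (\<Sum>j\<in>J. complex_of_real (w j) * poly p (z j) * cnj (poly q (z j)))"
proof -
  have dm: "dmeas_w z w J (z j) = w j" if j: "j \<in> J" for j
  proof -
    have "{i \<in> J. z i = z j} = {j}" using j inj by (auto dest: inj_onD)
    then show ?thesis unfolding dmeas_w_def by simp
  qed
  show ?thesis unfolding l2ip_def using inj dm by (simp add: sum.reindex)
qed

lemma subs_ne:
  assumes "finite J" "n \<le> card J"
  shows "subs J n \<noteq> {}"
proof -
  obtain T where "T \<subseteq> J" "card T = n" using obtain_subset_with_card_n[OF assms(2)] by metis
  then show ?thesis unfolding subs_def by auto
qed

lemma sum_cw_pos:
  assumes fin: "finite J" and inj: "inj_on z J" and pos: "\<forall>j\<in>J. w j > 0" and n: "n \<le> card J"
  shows "(\<Sum>S\<in>subs J n. cw z w S) > 0"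
proof (rule sum_pos)
  show "finite (subs J n)" using fin by (rule finite_subs)
  show "subs J n \<noteq> {}" using fin n by (rule subs_ne)
  fix S assume S: "S \<in> subs J n"
  then have SJ: "S \<subseteq> J" by (simp add: subs_def)
  show "cw z w S > 0"
    using cw_pos[OF finite_subset[OF SJ fin] inj_on_subset[OF inj SJ]] pos SJ by auto
qed

lemma heine_monic:
  assumes fin: "finite J" and inj: "inj_on z J" and pos: "\<forall>j\<in>J. w j > 0" and n: "n \<le> card J"
  shows "degree (heine z w J n) = n" "coeff (heine z w J n) n = 1"
proof -
  define C where "C = (\<Sum>S\<in>subs J n. cw z w S)"
  have Cpos: "C > 0" unfolding C_def using sum_cw_pos[OF assms] .
  have fS: "S \<in> subs J n \<Longrightarrow> finite S \<and> card S = n" for S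
    using fin unfolding subs_def by (auto intro: finite_subset)
  have c: "coeff (heine z w J n) n = 1"
  proof -
    have "coeff (heine z w J n) n = (1 / complex_of_real C) * (\<Sum>S\<in>subs J n. complex_of_real (cw z w S))"
      unfolding heine_def C_def coeff_smult coeff_sum
      by (intro arg_cong2[where f="(*)"] refl sum.cong) (use fS lin_prod(2) in auto)
    also have "(\<Sum>S\<in>subs J n. complex_of_real (cw z w S)) = complex_of_real C"
      unfolding C_def by simp
    also have "(1 / complex_of_real C) * complex_of_real C = 1" using Cpos by simp
    finally show ?thesis .
  qed
  have d: "degree (heine z w J n) \<le> n"
    unfolding heine_def
  proof (rule order.trans[OF degree_smult_le], rule degree_sum_le)
    show "finite (subs J n)" using fin by (rule finite_subs)
    fix S assume "S \<in> subs J n"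
    then show "degree (smult (complex_of_real (cw z w S)) (\<Prod>j\<in>S. [:- z j, 1:])) \<le> n"
      using fS lin_prod(1) by (metis degree_smult_le order.trans order.refl)
  qed
  have "n \<le> degree (heine z w J n)" using c by (intro le_degree) simp
  with d show "degree (heine z w J n) = n" by simp
  show "coeff (heine z w J n) n = 1" by (rule c)
qed

lemma monicOP_heine:
  assumes fin: "finite J" and inj: "inj_on z J" and pos: "\<forall>j\<in>J. w j > 0" and n: "n \<le> card J"
  shows "monicOP (z ` J) (dmeas_w z w J) n = heine z w J n"
  unfolding monicOP_def
proof (rule the_equality)
  let ?H = "heine z w J n"
  have orthH: "\<And>q. degree q < n \<Longrightarrow> l2ip (z ` J) (dmeas_w z w J) ?H q = 0"
    using heine_orth[OF fin inj] l2ip_reindex[OF fin inj] by simp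
  show "degree ?H = n \<and> lead_coeff ?H = 1 \<and> (\<forall>q. degree q < n \<longrightarrow> l2ip (z ` J) (dmeas_w z w J) ?H q = 0)"
    using heine_monic[OF assms] orthH by simp
  fix p assume p: "degree p = n \<and> lead_coeff p = 1 \<and> (\<forall>q. degree q < n \<longrightarrow> l2ip (z ` J) (dmeas_w z w J) p q = 0)"
  have cp: "coeff p n = 1" using p by metis
  show "p = ?H"
  proof (rule poly_eqI_degree_lead_coeff[of p n ?H "z ` J"])
    show "coeff p n = coeff ?H n" by (metis (no_types) p heine_monic(2)[OF assms])
    show "n \<le> card (z ` J)" using n card_image[OF inj] by simp
    show "degree p \<le> n" using p by simp
    show "degree ?H \<le> n" using heine_monic[OF assms] by simp
    define d where "d = p - ?H"
    have dd: "degree d < n" if "n > 0"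
    proof (rule degree_lessI)
      show "d \<noteq> 0 \<or> 0 < n" using that by simp
      show "\<forall>k\<ge>n. coeff d k = 0"
      proof (intro allI impI)
        fix k assume k: "n \<le> k"
        show "coeff d k = 0"
        proof (cases "k = n")
          case True then show ?thesis unfolding d_def using p cp heine_monic[OF assms] by simp
        next
          case False
          then have "k > degree p" "k > degree ?H" using k p heine_monic[OF assms] by auto
          then show ?thesis unfolding d_def by (simp add: coeff_eq_0)
        qed
      qed
    qed
    have zero: "(\<Sum>j\<in>J. complex_of_real (w j) * poly d (z j) * cnj (poly d (z j))) = 0"
    proof (cases "n = 0")
      case True
      then have "degree d = 0" unfolding d_def using p heine_monic[OF assms]
        by (metis degree_diff_le le_zero_eq max.idem)
      have "coeff d 0 = 0" unfolding d_def using p cp heine_monic[OF assms] True by simp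
      then have "d = 0" using \<open>degree d = 0\<close> by (metis leading_coeff_0_iff)
      then show ?thesis by simp
    next
      case False
      have "l2ip (z ` J) (dmeas_w z w J) p d = 0" "l2ip (z ` J) (dmeas_w z w J) ?H d = 0"
        using p orthH dd False by auto
      then have "(\<Sum>j\<in>J. complex_of_real (w j) * poly p (z j) * cnj (poly d (z j))) -
                 (\<Sum>j\<in>J. complex_of_real (w j) * poly ?H (z j) * cnj (poly d (z j))) = 0"
        using l2ip_reindex[OF fin inj] by simp
      then show ?thesis unfolding d_def by (simp add: sum_subtractf[symmetric] algebra_simps)
    qed
    have "(\<Sum>j\<in>J. complex_of_real (w j * (cmod (poly d (z j)))^2)) = 0"
      using zero by (simp add: complex_norm_square[symmetric] mult.assoc del: of_real_power)
    then have "(\<Sum>j\<in>J. w j * (cmod (poly d (z j)))^2) = 0"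
      by (metis of_real_eq_0_iff of_real_sum)
    then have "\<forall>j\<in>J. w j * (cmod (poly d (z j)))^2 = 0"
      using fin pos by (subst (asm) sum_nonneg_eq_0_iff) (auto intro: less_imp_le)
    then have "\<forall>j\<in>J. poly d (z j) = 0" using pos by force
    then show "\<And>x. x \<in> z ` J \<Longrightarrow> poly p x = poly ?H x" unfolding d_def by auto
  qed
qed

lemma verb_disc_heine:
  assumes fin: "finite J" and inj: "inj_on z J" and pos: "\<forall>j\<in>J. w j > 0" and n: "Suc n \<le> card J"
  shows "verb_disc z w J n = - cnj ((\<Sum>S\<in>subs J (Suc n). complex_of_real (cw z w S) * (\<Prod>j\<in>S. - z j))
          / complex_of_real (\<Sum>S\<in>subs J (Suc n). cw z w S))"
  unfolding verb_disc_def verblunsky_def monicOP_heine[OF assms]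
  by (simp add: heine_def poly_sum poly_prod)

lemma exp_lim:
  fixes c :: real
  assumes "c \<le> 0"
  shows "((\<lambda>t::real. exp (t * c)) \<longlongrightarrow> (if c = 0 then 1 else 0)) at_top"
proof (cases "c = 0")
  case True then show ?thesis by simp
next
  case False
  then have c: "c < 0" using assms by simp
  have "filterlim (\<lambda>t::real. c * t) at_bot at_top"
    by (rule filterlim_tendsto_neg_mult_at_bot[OF tendsto_const c filterlim_ident])
  then have "((\<lambda>t::real. exp (c * t)) \<longlongrightarrow> 0) at_top"
    by (rule filterlim_compose[OF exp_at_bot])
  then show ?thesis using False by (simp add: mult.commute)
qed

lemma VV_union:
  assumes "finite A" "finite T" "A \<inter> T = {}"
  shows "VV z (A \<union> T) = VV z A * VV z T * (\<Prod>j\<in>T. \<Prod>p\<in>A. cmod (z j - z p))^2"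
  using assms(2,3)
proof (induction T rule: finite_induct)
  case empty then show ?case by simp
next
  case (insert x T)
  have xA: "x \<notin> A" using insert by auto
  have fAT: "finite (A \<union> T)" using assms(1) insert by simp
  have xAT: "x \<notin> A \<union> T" using insert xA by auto
  have "VV z (A \<union> insert x T) = VV z (insert x (A \<union> T))" by simp
  also have "\<dots> = VV z (A \<union> T) * (\<Prod>j\<in>A \<union> T. cmod (z x - z j))^2"
    by (rule VV_insert[OF fAT xAT])
  also have "(\<Prod>j\<in>A \<union> T. cmod (z x - z j)) = (\<Prod>j\<in>A. cmod (z x - z j)) * (\<Prod>j\<in>T. cmod (z x - z j))"
    using assms(1) insert by (intro prod.union_disjoint) auto
  also have "VV z (A \<union> T) = VV z A * VV z T * (\<Prod>j\<in>T. \<Prod>p\<in>A. cmod (z j - z p))^2"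
    using insert by auto
  also have "VV z (insert x T) = VV z T * (\<Prod>j\<in>T. cmod (z x - z j))^2"
    by (rule VV_insert[OF insert(1,2)])
  moreover have "(\<Prod>j\<in>insert x T. \<Prod>p\<in>A. cmod (z j - z p)) = (\<Prod>p\<in>A. cmod (z x - z p)) * (\<Prod>j\<in>T. \<Prod>p\<in>A. cmod (z j - z p))"
    using insert by simp
  ultimately show ?case by (simp add: power_mult_distrib mult_ac)
qed



theorem theorem1p5:
  fixes m :: nat and z :: "nat \<Rightarrow> complex" and \<mu> :: "nat \<Rightarrow> real"
    and G :: "complex \<Rightarrow> real" and a b l :: nat
  assumes distinct: "inj_on z {1..m}"
    and circle: "\<forall>j\<in>{1..m}. cmod (z j) = 1"
    and pos: "\<forall>j\<in>{1..m}. \<mu> j > 0"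
    and total: "(\<Sum>j\<in>{1..m}. \<mu> j) = 1"
    and ordered: "\<forall>j. 1 \<le> j \<and> j < m \<longrightarrow> G (z j) \<ge> G (z (Suc j))"
    and Kgroup: "is_K_group G z m a b"
    and l: "l \<in> {a+1..b}"
  shows "((\<lambda>t. verb_disc z (sigma_w G z \<mu> m t) {1..m} (l - 1)) \<longlongrightarrow>
           (-1) ^ a * cnj (\<Prod>p\<in>{1..a}. z p) * verb_disc z (muK_w z \<mu> a b) {a+1..b} (l - a - 1))
         at_top"
proof -
  have ab: "a < b" "b \<le> m" and hK1: "\<forall>j\<in>{a+1..b}. G (z j) = G (z (a+1))"
    and ha: "a = 0 \<or> G (z a) \<noteq> G (z (a+1))" and hb: "b = m \<or> G (z b) \<noteq> G (z (b+1))"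
    using Kgroup unfolding is_K_group_def by blast+
  have l1: "a + 1 \<le> l" "l \<le> b" using l by auto
  define J where "J = {1..m}"
  define A where "A = {1..a}"
  define K where "K = {a+1..b}"
  define \<gamma> where "\<gamma> = G (z (a+1))"
  define h where "h j = G (z j) - \<gamma>" for j
  have finJ: "finite J" and finA: "finite A" and finK: "finite K" by (simp_all add: J_def A_def K_def)
  have cardA: "card A = a" and cardK: "card K = b - a" and cardJ: "card J = m"
    by (simp_all add: J_def A_def K_def)
  have AJ: "A \<subseteq> J" and KJ: "K \<subseteq> J" and AK: "A \<inter> K = {}"
    using ab by (auto simp: J_def A_def K_def)
  have injJ: "inj_on z J" using distinct by (simp add: J_def)
  have injK: "inj_on z K" using inj_on_subset[OF injJ KJ] .
  have mono: "G (z j) \<le> G (z i)" if ij: "1 \<le> i" "i \<le> j" "j \<le> m" for i j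
  proof -
    have "j \<le> m \<longrightarrow> G (z j) \<le> G (z i)" using ij(2)
    proof (induction j rule: dec_induct)
      case base then show ?case by simp
    next
      case (step n)
      show ?case
      proof
        assume "Suc n \<le> m"
        then have "G (z (Suc n)) \<le> G (z n)" using ordered step(1) ij(1) by auto
        then show "G (z (Suc n)) \<le> G (z i)" using step \<open>Suc n \<le> m\<close> by auto
      qed
    qed
    then show ?thesis using ij by simp
  qed
  have hA: "h j > 0" if j: "j \<in> A" for j
  proof -
    have a0: "a > 0" "1 \<le> j" "j \<le> a" using j by (auto simp: A_def)
    then have "G (z a) \<noteq> \<gamma>" using ha by (simp add: \<gamma>_def)
    moreover have "G (z a) \<ge> \<gamma>" using ordered a0 ab unfolding \<gamma>_def by auto
    moreover have "G (z a) \<le> G (z j)" using mono[of j a] a0 ab by simp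
    ultimately show ?thesis unfolding h_def by simp
  qed
  have hK: "h j = 0" if j: "j \<in> K" for j
  proof -
    have "j \<in> {a+1..b}" using j by (simp add: K_def)
    then have "G (z j) = G (z (a+1))" using hK1 by blast
    then show ?thesis unfolding h_def \<gamma>_def by simp
  qed
  have hH: "h j < 0" if j: "j \<in> J" "b < j" for j
  proof -
    have bm: "b < m" using j by (simp add: J_def)
    then have "G (z b) \<noteq> G (z (b+1))" using hb by simp
    moreover have "G (z b) = \<gamma>"
    proof -
      have "b \<in> {a+1..b}" using ab by simp
      then show ?thesis using hK1 unfolding \<gamma>_def by blast
    qed
    moreover have "G (z b) \<ge> G (z (b+1))" using ordered ab bm by simp
    moreover have "G (z j) \<le> G (z (b+1))" using mono[of "b+1" j] j bm by (simp add: J_def)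
    ultimately show ?thesis unfolding h_def by simp
  qed
  define M' where "M' = (\<Sum>j\<in>A. G (z j)) + real (l - a) * \<gamma>"
  define gS where "gS S = (\<Sum>j\<in>S. G (z j))" for S
  define P where "P S \<longleftrightarrow> A \<subseteq> S \<and> S \<subseteq> {1..b}" for S
  have key: "gS S - M' \<le> 0 \<and> (gS S - M' = 0 \<longleftrightarrow> P S)" if S: "S \<in> subs J l" for S
  proof -
    have SJ: "S \<subseteq> J" and cS: "card S = l" using S by (auto simp: subs_def)
    have fS: "finite S" using finite_subset[OF SJ finJ] .
    define X where "X = S - A - {..b}"
    define Y where "Y = A - S"
    have e1: "gS S - M' = (\<Sum>j\<in>S. h j) - (\<Sum>j\<in>A. h j)"
    proof -
      have "gS S = (\<Sum>j\<in>S. h j) + real l * \<gamma>"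
        unfolding gS_def h_def using cS by (simp add: sum_subtractf)
      moreover have "(\<Sum>j\<in>A. G (z j)) = (\<Sum>j\<in>A. h j) + real a * \<gamma>"
        unfolding h_def using cardA by (simp add: sum_subtractf)
      moreover have "real (l - a) = real l - real a" using l1 by simp
      ultimately show ?thesis unfolding M'_def by (simp add: algebra_simps)
    qed
    have e2: "(\<Sum>j\<in>S. h j) = (\<Sum>j\<in>S \<inter> A. h j) + (\<Sum>j\<in>X. h j)"
    proof -
      have "(\<Sum>j\<in>S. h j) = (\<Sum>j\<in>S \<inter> A. h j) + (\<Sum>j\<in>S - A. h j)"
        using fS by (rule sum.Int_Diff)
      moreover have "(\<Sum>j\<in>S - A. h j) = (\<Sum>j\<in>(S - A) \<inter> {..b}. h j) + (\<Sum>j\<in>X. h j)"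
        unfolding X_def using fS by (intro sum.Int_Diff) simp
      moreover have "(\<Sum>j\<in>(S - A) \<inter> {..b}. h j) = 0"
      proof (rule sum.neutral, rule ballI)
        fix j assume "j \<in> (S - A) \<inter> {..b}"
        then have "j \<in> K" using SJ by (auto simp: A_def K_def J_def)
        then show "h j = 0" by (rule hK)
      qed
      ultimately show ?thesis by simp
    qed
    have e3: "(\<Sum>j\<in>A. h j) = (\<Sum>j\<in>S \<inter> A. h j) + (\<Sum>j\<in>Y. h j)"
    proof -
      have "(\<Sum>j\<in>A. h j) = (\<Sum>j\<in>A \<inter> S. h j) + (\<Sum>j\<in>A - S. h j)"
        using finA by (rule sum.Int_Diff)
      then show ?thesis unfolding Y_def by (simp add: Int_commute)
    qed
    have D: "gS S - M' = (\<Sum>j\<in>X. h j) - (\<Sum>j\<in>Y. h j)" using e1 e2 e3 by simp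
    have fX: "finite X" and fY: "finite Y" using fS finA by (simp_all add: X_def Y_def)
    have Xneg: "\<forall>j\<in>X. h j < 0" using hH SJ unfolding X_def by force
    have Ypos: "\<forall>j\<in>Y. h j > 0" using hA unfolding Y_def by auto
    have sX: "(\<Sum>j\<in>X. h j) \<le> 0" using Xneg by (intro sum_nonpos) (auto intro: less_imp_le)
    have sY: "(\<Sum>j\<in>Y. h j) \<ge> 0" using Ypos by (intro sum_nonneg) (auto intro: less_imp_le)
    have sX0: "(\<Sum>j\<in>X. h j) < 0" if "X \<noteq> {}"
    proof -
      have "0 < (\<Sum>j\<in>X. - h j)" using fX that Xneg by (intro sum_pos) auto
      then show ?thesis by (simp add: sum_negf)
    qed
    have sY0: "(\<Sum>j\<in>Y. h j) > 0" if "Y \<noteq> {}"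
      using fY that Ypos by (intro sum_pos) auto
    have x1: "X = {} \<longleftrightarrow> (\<forall>j\<in>S. j \<in> A \<or> j \<le> b)" unfolding X_def by blast
    have x2: "(\<forall>j\<in>S. j \<in> A \<or> j \<le> b) \<longleftrightarrow> (\<forall>j\<in>S. j \<le> b)" using ab unfolding A_def by auto
    have x3: "S \<subseteq> {1..b} \<longleftrightarrow> (\<forall>j\<in>S. j \<le> b)" using SJ unfolding J_def by auto
    have y1: "Y = {} \<longleftrightarrow> A \<subseteq> S" unfolding Y_def by blast
    have PXY: "P S \<longleftrightarrow> X = {} \<and> Y = {}" unfolding P_def using x1 x2 x3 y1 by blast
    show ?thesis using D sX sY sX0 sY0 PXY by (cases "X = {}"; cases "Y = {}") auto
  qed
  have finSJ: "finite (subs J l)" using finJ by (rule finite_subs)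
  have subsJ: "finite S \<and> card S = l \<and> S \<subseteq> J" if "S \<in> subs J l" for S
    using that finJ by (auto simp: subs_def intro: finite_subset)
  define N where "N t = (\<Sum>r\<in>{1..m}. \<mu> r * exp (t * G (z r)))" for t
  have Npos: "N t > 0" for t
    unfolding N_def using pos ab by (intro sum_pos) auto
  define sw where "sw t = sigma_w G z \<mu> m t" for t
  have sw_eq: "sw t j = \<mu> j * exp (t * G (z j)) / N t" for t j
    unfolding sw_def sigma_w_def N_def by simp
  have swpos: "\<forall>j\<in>J. sw t j > 0" for t using pos Npos by (simp add: sw_eq J_def)
  define C0 where "C0 S = (\<Prod>j\<in>S. \<mu> j) * VV z S" for S
  define E where "E S t = C0 S * exp (t * (gS S - M'))" for S t
  define \<kappa> where "\<kappa> t = exp (t * M') / N t ^ l" for t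
  define \<pi> where "\<pi> S = (\<Prod>j\<in>S. - z j)" for S
  have kpos: "\<kappa> t > 0" for t unfolding \<kappa>_def using Npos by simp
  have cw_sw: "cw z (sw t) S = E S t * \<kappa> t" if S: "S \<in> subs J l" for S t
  proof -
    have fS: "finite S" and cS: "card S = l" using subsJ[OF S] by auto
    have "(\<Prod>j\<in>S. sw t j) = (\<Prod>j\<in>S. \<mu> j) * (\<Prod>j\<in>S. exp (t * G (z j))) / N t ^ l"
      unfolding sw_eq using cS by (simp add: prod_dividef prod.distrib)
    also have "(\<Prod>j\<in>S. exp (t * G (z j))) = exp (t * gS S)"
      unfolding gS_def using fS by (simp add: exp_sum sum_distrib_left)
    also have "exp (t * gS S) = exp (t * (gS S - M')) * exp (t * M')"
      by (simp add: exp_add[symmetric] algebra_simps)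
    finally have "(\<Prod>j\<in>S. sw t j) = (\<Prod>j\<in>S. \<mu> j) * (exp (t * (gS S - M')) * exp (t * M')) / N t ^ l" .
    then show ?thesis unfolding cw_def E_def \<kappa>_def C0_def by (simp add: field_simps)
  qed
  have fval: "verb_disc z (sw t) J (l-1) = - cnj ((\<Sum>S\<in>subs J l. complex_of_real (E S t) * \<pi> S) /
      complex_of_real (\<Sum>S\<in>subs J l. E S t))" for t
  proof -
    have sl: "Suc (l-1) = l" using l1 by simp
    have "verb_disc z (sw t) J (l-1) = - cnj ((\<Sum>S\<in>subs J l. complex_of_real (cw z (sw t) S) * \<pi> S)
          / complex_of_real (\<Sum>S\<in>subs J l. cw z (sw t) S))"
      using verb_disc_heine[OF finJ injJ swpos, of "l-1"] sl l1 ab cardJ unfolding \<pi>_def by simp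
    also have "(\<Sum>S\<in>subs J l. complex_of_real (cw z (sw t) S) * \<pi> S) =
        complex_of_real (\<kappa> t) * (\<Sum>S\<in>subs J l. complex_of_real (E S t) * \<pi> S)"
      unfolding sum_distrib_left by (rule sum.cong[OF refl]) (simp add: cw_sw mult_ac)
    also have "(\<Sum>S\<in>subs J l. cw z (sw t) S) = \<kappa> t * (\<Sum>S\<in>subs J l. E S t)"
      unfolding sum_distrib_left by (rule sum.cong[OF refl]) (simp add: cw_sw mult_ac)
    finally show ?thesis using kpos[of t] by simp
  qed
  define Lv where "Lv S = (if P S then C0 S else 0)" for S
  have Elim: "((\<lambda>t. E S t) \<longlongrightarrow> Lv S) at_top" if S: "S \<in> subs J l" for S
  proof -
    have c: "gS S - M' \<le> 0" and cP: "gS S - M' = 0 \<longleftrightarrow> P S" using key[OF S] by auto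
    have "((\<lambda>t. C0 S * exp (t * (gS S - M'))) \<longlongrightarrow> C0 S * (if gS S - M' = 0 then 1 else 0)) at_top"
      by (intro tendsto_mult_left exp_lim c)
    then show ?thesis unfolding E_def Lv_def using cP by (cases "P S") simp_all
  qed
  define Tset where "Tset = subs K (l - a)"
  have finT: "finite Tset" unfolding Tset_def using finK by (rule finite_subs)
  have Tprop: "finite T \<and> T \<subseteq> K \<and> card T = l - a \<and> A \<inter> T = {}" if "T \<in> Tset" for T
    using that finK AK unfolding Tset_def subs_def by (auto intro: finite_subset)
  have F0: "{S \<in> subs J l. P S} = (\<lambda>T. A \<union> T) ` Tset"
  proof
    show "{S \<in> subs J l. P S} \<subseteq> (\<lambda>T. A \<union> T) ` Tset"
    proof
      fix S assume S: "S \<in> {S \<in> subs J l. P S}"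
      then have PS: "A \<subseteq> S" "S \<subseteq> {1..b}" and SJ: "S \<in> subs J l" by (auto simp: P_def)
      have cS: "card S = l" using subsJ[OF SJ] by simp
      have "S - A \<subseteq> K" using PS unfolding A_def K_def by auto
      moreover have "card (S - A) = l - a" using card_Diff_subset[OF finA PS(1)] cS cardA by simp
      ultimately have "S - A \<in> Tset" unfolding Tset_def subs_def by simp
      moreover have "S = A \<union> (S - A)" using PS by auto
      ultimately show "S \<in> (\<lambda>T. A \<union> T) ` Tset" by blast
    qed
    show "(\<lambda>T. A \<union> T) ` Tset \<subseteq> {S \<in> subs J l. P S}"
    proof
      fix S assume "S \<in> (\<lambda>T. A \<union> T) ` Tset"
      then obtain T where T: "T \<in> Tset" and ST: "S = A \<union> T" by blast
      have TP: "finite T" "T \<subseteq> K" "card T = l - a" "A \<inter> T = {}" using Tprop[OF T] by auto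
      have "card S = l" unfolding ST using card_Un_disjoint[OF finA TP(1) TP(4)] TP(3) cardA l1 by simp
      moreover have "S \<subseteq> J" unfolding ST using AJ KJ TP(2) by auto
      moreover have "P S" unfolding ST P_def using TP(2) ab unfolding A_def K_def by auto
      ultimately show "S \<in> {S \<in> subs J l. P S}" unfolding subs_def by simp
    qed
  qed
  have injU: "inj_on (\<lambda>T. A \<union> T) Tset"
  proof (rule inj_onI)
    fix T1 T2 assume T1: "T1 \<in> Tset" and T2: "T2 \<in> Tset" and eq: "A \<union> T1 = A \<union> T2"
    have "T1 = (A \<union> T1) - A" "T2 = (A \<union> T2) - A" using Tprop[OF T1] Tprop[OF T2] by auto
    then show "T1 = T2" using eq by simp
  qed
  have reC: "(\<Sum>S\<in>subs J l. if P S then g S else 0) = (\<Sum>T\<in>Tset. g (A \<union> T))" for g :: "nat set \<Rightarrow> complex"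
  proof -
    have "(\<Sum>S\<in>subs J l. if P S then g S else 0) = (\<Sum>S\<in>{S \<in> subs J l. P S}. g S)"
      using finSJ by (simp add: sum.inter_filter)
    also have "\<dots> = (\<Sum>T\<in>Tset. g (A \<union> T))" unfolding F0 using injU by (simp add: sum.reindex)
    finally show ?thesis .
  qed
  have reR: "(\<Sum>S\<in>subs J l. if P S then g S else 0) = (\<Sum>T\<in>Tset. g (A \<union> T))" for g :: "nat set \<Rightarrow> real"
  proof -
    have "(\<Sum>S\<in>subs J l. if P S then g S else 0) = (\<Sum>S\<in>{S \<in> subs J l. P S}. g S)"
      using finSJ by (simp add: sum.inter_filter)
    also have "\<dots> = (\<Sum>T\<in>Tset. g (A \<union> T))" unfolding F0 using injU by (simp add: sum.reindex)
    finally show ?thesis .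
  qed
  define PP where "PP j = (\<Prod>p\<in>A. (cmod (z j - z p))^2)" for j
  define Dk where "Dk = (\<Sum>r\<in>K. PP r * \<mu> r)"
  have muK_eq: "muK_w z \<mu> a b j = PP j * \<mu> j / Dk" for j
    unfolding muK_w_def PP_def Dk_def A_def K_def by simp
  have PPpos: "PP j > 0" if j: "j \<in> K" for j
    unfolding PP_def
  proof (rule prod_pos)
    fix p assume p: "p \<in> A"
    have "j \<noteq> p" using j p AK by auto
    then have "z j \<noteq> z p" using injJ j p AJ KJ by (auto dest: inj_onD)
    then show "0 < (cmod (z j - z p))^2" by simp
  qed
  have muJ: "\<mu> j > 0" if "j \<in> K" for j using pos that KJ by (auto simp: J_def)
  have Dkpos: "Dk > 0" unfolding Dk_def
  proof (rule sum_pos)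
    show "finite K" by (rule finK)
    show "K \<noteq> {}" using ab by (simp add: K_def)
    fix r assume "r \<in> K" then show "0 < PP r * \<mu> r" using PPpos muJ by simp
  qed
  have muKpos: "\<forall>j\<in>K. muK_w z \<mu> a b j > 0" using PPpos muJ Dkpos by (simp add: muK_eq)
  define \<kappa>' where "\<kappa>' = C0 A * Dk ^ (l - a)"
  have k'pos: "\<kappa>' > 0" unfolding \<kappa>'_def C0_def using Dkpos VV_pos[OF finA inj_on_subset[OF injJ AJ]] pos AJ
    by (auto intro!: mult_pos_pos prod_pos simp: J_def)
  have C0rel: "C0 (A \<union> T) = \<kappa>' * cw z (muK_w z \<mu> a b) T" if T: "T \<in> Tset" for T
  proof -
    have TP: "finite T" "T \<subseteq> K" "card T = l - a" "A \<inter> T = {}" using Tprop[OF T] by auto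
    have "C0 (A \<union> T) = ((\<Prod>j\<in>A. \<mu> j) * (\<Prod>j\<in>T. \<mu> j)) * (VV z A * VV z T * (\<Prod>j\<in>T. PP j))"
      unfolding C0_def VV_union[OF finA TP(1) TP(4)] prod.union_disjoint[OF finA TP(1) TP(4)]
      by (simp add: PP_def prod_power_distrib)
    moreover have "cw z (muK_w z \<mu> a b) T = (\<Prod>j\<in>T. PP j) * (\<Prod>j\<in>T. \<mu> j) / Dk ^ (l - a) * VV z T"
      unfolding cw_def muK_eq using TP(3) by (simp add: prod_dividef prod.distrib)
    ultimately show ?thesis unfolding \<kappa>'_def C0_def using Dkpos by (simp add: field_simps)
  qed
  have pirel: "\<pi> (A \<union> T) = \<pi> A * \<pi> T" if T: "T \<in> Tset" for T
    unfolding \<pi>_def using Tprop[OF T] finA by (simp add: prod.union_disjoint)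
  have piA: "\<pi> A = (-1) ^ a * (\<Prod>p\<in>A. z p)" unfolding \<pi>_def by (simp add: prod_uminus cardA)
  have LvC: "(\<Sum>S\<in>subs J l. complex_of_real (Lv S) * \<pi> S) =
      complex_of_real \<kappa>' * \<pi> A * (\<Sum>T\<in>Tset. complex_of_real (cw z (muK_w z \<mu> a b) T) * \<pi> T)"
  proof -
    have "(\<Sum>S\<in>subs J l. complex_of_real (Lv S) * \<pi> S) =
        (\<Sum>S\<in>subs J l. if P S then complex_of_real (C0 S) * \<pi> S else 0)"
      by (rule sum.cong[OF refl]) (simp add: Lv_def)
    also have "\<dots> = (\<Sum>T\<in>Tset. complex_of_real (C0 (A \<union> T)) * \<pi> (A \<union> T))" by (rule reC)
    also have "\<dots> = (\<Sum>T\<in>Tset. complex_of_real \<kappa>' * \<pi> A * (complex_of_real (cw z (muK_w z \<mu> a b) T) * \<pi> T))"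
      by (rule sum.cong[OF refl]) (simp add: C0rel pirel mult_ac)
    finally show ?thesis by (simp add: sum_distrib_left)
  qed
  have LvR: "(\<Sum>S\<in>subs J l. Lv S) = \<kappa>' * (\<Sum>T\<in>Tset. cw z (muK_w z \<mu> a b) T)"
  proof -
    have "(\<Sum>S\<in>subs J l. Lv S) = (\<Sum>S\<in>subs J l. if P S then C0 S else 0)"
      by (rule sum.cong[OF refl]) (simp add: Lv_def)
    also have "\<dots> = (\<Sum>T\<in>Tset. C0 (A \<union> T))" by (rule reR)
    also have "\<dots> = (\<Sum>T\<in>Tset. \<kappa>' * cw z (muK_w z \<mu> a b) T)"
      by (rule sum.cong[OF refl]) (simp add: C0rel)
    finally show ?thesis by (simp add: sum_distrib_left)
  qed
  have sumK_pos: "(\<Sum>T\<in>Tset. cw z (muK_w z \<mu> a b) T) > 0"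
    unfolding Tset_def using sum_cw_pos[OF finK injK muKpos, of "l - a"] l1 cardK ab by simp
  have DELnz: "(\<Sum>S\<in>subs J l. Lv S) \<noteq> 0" using LvR k'pos sumK_pos by simp
  have lim1: "((\<lambda>t. - cnj ((\<Sum>S\<in>subs J l. complex_of_real (E S t) * \<pi> S) /
      complex_of_real (\<Sum>S\<in>subs J l. E S t))) \<longlongrightarrow>
      - cnj ((\<Sum>S\<in>subs J l. complex_of_real (Lv S) * \<pi> S) / complex_of_real (\<Sum>S\<in>subs J l. Lv S))) at_top"
  proof -
    have DELc: "(\<Sum>x\<in>subs J l. complex_of_real (Lv x)) \<noteq> 0"
      using DELnz by (metis of_real_eq_0_iff of_real_sum)
    show ?thesis by (intro tendsto_intros Elim) (use DELc in auto)
  qed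
  have valeq: "- cnj ((\<Sum>S\<in>subs J l. complex_of_real (Lv S) * \<pi> S) / complex_of_real (\<Sum>S\<in>subs J l. Lv S))
     = (-1) ^ a * cnj (\<Prod>p\<in>A. z p) * verb_disc z (muK_w z \<mu> a b) K (l - a - 1)"
  proof -
    define X where "X = (\<Sum>T\<in>Tset. complex_of_real (cw z (muK_w z \<mu> a b) T) * \<pi> T)"
    define Y where "Y = (\<Sum>T\<in>Tset. cw z (muK_w z \<mu> a b) T)"
    have vK: "verb_disc z (muK_w z \<mu> a b) K (l - a - 1) = - cnj (X / complex_of_real Y)"
    proof -
      have s: "Suc (l - a - 1) = l - a" using l1 by simp
      show ?thesis using verb_disc_heine[OF finK injK muKpos, of "l - a - 1"] s l1 cardK ab
        unfolding X_def Y_def Tset_def \<pi>_def by simp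
    qed
    have "(\<Sum>S\<in>subs J l. complex_of_real (Lv S) * \<pi> S) / complex_of_real (\<Sum>S\<in>subs J l. Lv S)
        = \<pi> A * (X / complex_of_real Y)"
      unfolding LvC LvR X_def[symmetric] Y_def[symmetric] using k'pos by simp
    then show ?thesis unfolding vK piA by simp
  qed
  have "((\<lambda>t. verb_disc z (sw t) J (l-1)) \<longlongrightarrow> (-1) ^ a * cnj (\<Prod>p\<in>A. z p) * verb_disc z (muK_w z \<mu> a b) K (l - a - 1)) at_top"
    unfolding fval valeq[symmetric] by (rule lim1)
  then show ?thesis unfolding sw_def J_def A_def K_def .
qed

end
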